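(* In the continuous Donation Game, let $\chi>1$ and $\kappa\in\mathbb{R}$. Suppose there exist a bounded measurable $\psi:[0,K]\to\mathbb{R}$, a probability measure $\sigma_X^0$ on $[0,K]$ and a Markov kernel $\sigma_X[x,y]$ from $[0,K]^2$ to $[0,K]$ such that for all $x,y\in[0,K]$, $$\big(u_X(x,y)-\kappa\big)-\chi\big(u_Y(x,y)-\kappa\big)=\psi(x)-\lambda\int\psi(s)\,d\sigma_X[x,y](s)-(1-\lambda)\int\psi(s)\,d\sigma_X^0(s).$$ Then $0\le\kappa\le b(K)-c(K)$.
   Context: Continuous Donation Game: fix $K>0$ and measurable nondecreasing functions $b,c:[0,K]\to\mathbb{R}$ with $b(0)=c(0)=0$ and $b(s)>c(s)$ for $s>0$. Action spaces $S_X=S_Y=[0,K]$, payoffs $u_X(x,y)=b(y)-c(x)$, $u_Y(x,y)=b(x)-c(y)$, discount factor $\lambda\in(0,1)$. *)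

theory Defs
  imports "HOL-Probability.Probability"
begin

definition act_space :: "real \<Rightarrow> real measure" where
  "act_space K = restrict_space borel {0..K}"

definition donation_game :: "real \<Rightarrow> (real \<Rightarrow> real) \<Rightarrow> (real \<Rightarrow> real) \<Rightarrow> bool" where
  "donation_game K b c \<longleftrightarrow>
     K > 0 \<and>
     b \<in> borel_measurable (act_space K) \<and> c \<in> borel_measurable (act_space K) \<and>
     mono_on {0..K} b \<and> mono_on {0..K} c \<and>
     b 0 = 0 \<and> c 0 = 0 \<and> (\<forall>s\<in>{0<..K}. b s > c s)"

definition uX :: "(real \<Rightarrow> real) \<Rightarrow> (real \<Rightarrow> real) \<Rightarrow> real \<Rightarrow> real \<Rightarrow> real" where
  "uX b c x y = b y - c x"

definition uY :: "(real \<Rightarrow> real) \<Rightarrow> (real \<Rightarrow> real) \<Rightarrow> real \<Rightarrow> real \<Rightarrow> real" where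
  "uY b c x y = b x - c y"

end

theory Submission
  imports Defs
begin

lemma int_bounds:
  fixes m M :: real
  assumes N: "N \<in> space (prob_algebra (act_space K))"
    and pm: "psi \<in> borel_measurable (act_space K)"
    and bd: "\<forall>s\<in>{0..K}. m \<le> psi s \<and> psi s \<le> M"
  shows "m \<le> (\<integral>s. psi s \<partial>N) \<and> (\<integral>s. psi s \<partial>N) \<le> M"
proof -
  have sN: "sets N = sets (act_space K)" and P: "prob_space N"
    using N by (auto simp: space_prob_algebra)
  have spN: "space N = {0..K}"
    using sets_eq_imp_space_eq[OF sN] by (simp add: act_space_def space_restrict_space)
  have pm': "psi \<in> borel_measurable N"
    using pm measurable_cong_sets[OF sN refl] by blast
  have bnd: "\<forall>s\<in>space N. norm (psi s) \<le> max \<bar>m\<bar> \<bar>M\<bar>"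
  proof
    fix s assume "s \<in> space N"
    then have "m \<le> psi s \<and> psi s \<le> M" using bd spN by auto
    then show "norm (psi s) \<le> max \<bar>m\<bar> \<bar>M\<bar>" unfolding real_norm_def by arith
  qed
  interpret prob_space N by (rule P)
  have int: "integrable N psi"
    by (rule integrable_const_bound[where B="max \<bar>m\<bar> \<bar>M\<bar>"]) (use bnd pm' in auto)
  have "(\<integral>s. psi s \<partial>N) \<le> (\<integral>s. M \<partial>N)"
    by (rule integral_mono) (use int bd spN in auto)
  moreover have "(\<integral>s. m \<partial>N) \<le> (\<integral>s. psi s \<partial>N)"
    by (rule integral_mono) (use int bd spN in auto)
  ultimately show ?thesis by (simp add: prob_space)
qed

lemma nonneg_of_eps: "(\<And>e::real. e > 0 \<Longrightarrow> a \<ge> - e) \<Longrightarrow> a \<ge> 0"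
proof (rule ccontr)
  assume h: "\<And>e::real. e > 0 \<Longrightarrow> a \<ge> - e" and "\<not> a \<ge> 0"
  then have "-a/2 > 0" by simp
  from h[OF this] \<open>\<not> a \<ge> 0\<close> show False by simp
qed

theorem mainTheorem13:
  fixes K lam chi kappa :: real and b c psi :: "real \<Rightarrow> real"
    and sigma0 :: "real measure" and sigma :: "real \<times> real \<Rightarrow> real measure"
  assumes game: "donation_game K b c"
    and lam: "0 < lam" "lam < 1"
    and chi: "chi > 1"
    and psi_meas: "psi \<in> borel_measurable (act_space K)"
    and psi_bdd: "\<exists>B. \<forall>s\<in>{0..K}. \<bar>psi s\<bar> \<le> B"
    and sigma0: "sigma0 \<in> space (prob_algebra (act_space K))"
    and sigma: "sigma \<in> (act_space K \<Otimes>\<^sub>M act_space K) \<rightarrow>\<^sub>M prob_algebra (act_space K)"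
    and eq: "\<forall>x\<in>{0..K}. \<forall>y\<in>{0..K}.
       (uX b c x y - kappa) - chi * (uY b c x y - kappa)
         = psi x - lam * (\<integral>s. psi s \<partial>sigma (x, y)) - (1 - lam) * (\<integral>s. psi s \<partial>sigma0)"
  shows "0 \<le> kappa \<and> kappa \<le> b K - c K"
proof -
  obtain B where B: "\<forall>s\<in>{0..K}. \<bar>psi s\<bar> \<le> B" using psi_bdd by blast
  have K: "K > 0" and bm: "mono_on {0..K} b" and cm: "mono_on {0..K} c"
    and b0: "b 0 = 0" and c0: "c 0 = 0"
    using game by (auto simp: donation_game_def)
  define M where "M = Sup (psi ` {0..K})"
  define m where "m = Inf (psi ` {0..K})"
  have ne: "{0..K} \<noteq> {}" using K by simp
  have ba: "bdd_above (psi ` {0..K})" using B by (auto intro!: bdd_aboveI[where M=B] simp: abs_le_iff)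
  have bb: "bdd_below (psi ` {0..K})" using B by (auto intro!: bdd_belowI[where m="-B"] simp: abs_le_iff)
  have bd: "\<forall>s\<in>{0..K}. m \<le> psi s \<and> psi s \<le> M"
    unfolding m_def M_def using ba bb by (auto intro: cINF_lower cSUP_upper)
  have sp: "space (act_space K \<Otimes>\<^sub>M act_space K) = {0..K} \<times> {0..K}"
    by (simp add: act_space_def space_pair_measure space_restrict_space)
  have sig: "sigma (x, y) \<in> space (prob_algebra (act_space K))" if "x \<in> {0..K}" "y \<in> {0..K}" for x y
    using measurable_space[OF sigma, of "(x,y)"] that sp by auto
  have I0: "m \<le> (\<integral>s. psi s \<partial>sigma0) \<and> (\<integral>s. psi s \<partial>sigma0) \<le> M"
    by (rule int_bounds[OF sigma0 psi_meas bd])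
  have I: "m \<le> (\<integral>s. psi s \<partial>sigma (x,y)) \<and> (\<integral>s. psi s \<partial>sigma (x,y)) \<le> M"
    if "x \<in> {0..K}" "y \<in> {0..K}" for x y
    by (rule int_bounds[OF sig[OF that] psi_meas bd])
  have K0: "0 \<in> {0..K}" "K \<in> {0..K}" using K by auto
  have bx: "0 \<le> b x" "0 \<le> c x" "b x \<le> b K" "c x \<le> c K" if "x \<in> {0..K}" for x
    using mono_onD[OF bm K0(1) that] mono_onD[OF cm K0(1) that]
      mono_onD[OF bm that K0(2)] mono_onD[OF cm that K0(2)] that b0 c0 by auto
  have lo: "(chi - 1) * kappa \<ge> - e" if e: "e > 0" for e
  proof -
    have "M - e < M" using e by simp
    then obtain x where x: "x \<in> {0..K}" "M - e < psi x"
      unfolding M_def using less_cSUP_iff[OF ne ba] by (auto simp: M_def)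
    have "(uX b c x 0 - kappa) - chi * (uY b c x 0 - kappa)
         = psi x - lam * (\<integral>s. psi s \<partial>sigma (x, 0)) - (1 - lam) * (\<integral>s. psi s \<partial>sigma0)"
      using eq x K0 by blast
    moreover have "lam * (\<integral>s. psi s \<partial>sigma (x, 0)) \<le> lam * M"
      using I[OF x(1) K0(1)] lam by (intro mult_left_mono) auto
    moreover have "(1 - lam) * (\<integral>s. psi s \<partial>sigma0) \<le> (1 - lam) * M"
      using I0 lam by (intro mult_left_mono) auto
    moreover have "chi * b x \<ge> 0" using bx[OF x(1)] chi by simp
    moreover have "chi * (b x - c 0 - kappa) = chi * b x - chi * kappa" using c0 by (simp add: algebra_simps)
    moreover have "(chi - 1) * kappa = chi * kappa - kappa" by (simp add: algebra_simps)
    moreover have "lam * M + (1 - lam) * M = M" by (simp add: algebra_simps)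
    ultimately show ?thesis using x bx[OF x(1)] b0 c0 unfolding uX_def uY_def by linarith
  qed
  have hi: "(chi - 1) * (b K - c K - kappa) \<ge> - e" if e: "e > 0" for e
  proof -
    have "m < m + e" using e by simp
    then obtain x where x: "x \<in> {0..K}" "psi x < m + e"
      unfolding m_def using cINF_less_iff[OF ne bb, of "m + e"] e by (auto simp: m_def)
    have "(uX b c x K - kappa) - chi * (uY b c x K - kappa)
         = psi x - lam * (\<integral>s. psi s \<partial>sigma (x, K)) - (1 - lam) * (\<integral>s. psi s \<partial>sigma0)"
      using eq x K0 by blast
    moreover have "lam * (\<integral>s. psi s \<partial>sigma (x, K)) \<ge> lam * m"
      using I[OF x(1) K0(2)] lam by (intro mult_left_mono) auto
    moreover have "(1 - lam) * (\<integral>s. psi s \<partial>sigma0) \<ge> (1 - lam) * m"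
      using I0 lam by (intro mult_left_mono) auto
    moreover have "chi * b x \<le> chi * b K" using bx[OF x(1)] chi by simp
    moreover have "chi * (b x - c K - kappa) = chi * b x - chi * c K - chi * kappa" by (simp add: algebra_simps)
    moreover have "(chi - 1) * (b K - c K - kappa) = chi * b K - chi * c K - chi * kappa - b K + c K + kappa" by (simp add: algebra_simps)
    moreover have "lam * m + (1 - lam) * m = m" by (simp add: algebra_simps)
    ultimately show ?thesis using x bx[OF x(1)] unfolding uX_def uY_def by linarith
  qed
  have "(chi - 1) * kappa \<ge> 0" by (rule nonneg_of_eps) (use lo in auto)
  moreover have "(chi - 1) * (b K - c K - kappa) \<ge> 0" by (rule nonneg_of_eps) (use hi in auto)
  ultimately show ?thesis using chi by (simp add: zero_le_mult_iff)
qed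

end
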